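(* Let $\mu_4$ be the $4$-fold convolution of the standard middle-third Cantor measure, i.e. the self-similar measure with $d=3$, $m=4$, $(p_0,\dots,p_4)=\tfrac1{16}(1,4,6,4,1)$. Then $$\alpha_4^*:=\sup\left(\Delta\mu_4\setminus\{4\log2/\log3\}\right)=\frac{\log(16/5)}{\log3},$$ and this value is attained as the local dimension of $\mu_4$ at $x=1/2$.
   Context: Given integers $d\ge3$, $m\ge d$ and a probability vector $(p_0,\dots,p_m)$, the associated self-similar measure is the unique compactly supported Borel probability measure $\mu$ with $\mu(A)=\sum_{i=0}^m p_i\,\mu(dA-i)$ for all Borel $A$. The standard Cantor measure is the one with $d=3$, $m=1$, $p_0=p_1=1/2$ (supported on $[0,1/2]$ in this normalization); its $4$-fold convolution is the self-similar measure with $d=3$, $m=4$, $p_i=\binom4i/16$. $\Delta\mu$ is the set of values $\dim\mu(x)=\lim_{r\to0^+}\log\mu(B(x,r))/\log r$ over $x\in\operatorname{supp}\mu$ where this limit exists; for $\mu_4$ the maximal element of $\Delta\mu_4$ is $4\log2/\log3$. *)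

theory Defs
  imports "HOL-Probability.Probability"
begin

definition self_similar_measure :: "nat \<Rightarrow> nat \<Rightarrow> (nat \<Rightarrow> real) \<Rightarrow> real measure \<Rightarrow> bool" where
  "self_similar_measure d m p M \<longleftrightarrow>
     prob_space M \<and> sets M = sets borel \<and>
     (\<exists>K. compact K \<and> emeasure M (- K) = 0) \<and>
     (\<forall>A\<in>sets borel. measure M A =
        (\<Sum>i\<le>m. p i * measure M ((\<lambda>a. real d * a - real i) ` A)))"

definition msupp :: "real measure \<Rightarrow> real set" where
  "msupp M = {x. \<forall>r>0. emeasure M (cball x r) > 0}"

definition has_local_dim :: "real measure \<Rightarrow> real \<Rightarrow> real \<Rightarrow> bool" where
  "has_local_dim M x a \<longleftrightarrow>
     ((\<lambda>r. ln (measure M (cball x r)) / ln r) \<longlongrightarrow> a) (at_right 0)"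

definition local_dims :: "real measure \<Rightarrow> real set" where
  "local_dims M = {a. \<exists>x\<in>msupp M. has_local_dim M x a}"

end

theory Submission
  imports Defs "HOL-Probability.Probability"
begin

lemma img_affine_borel:
  fixes c t :: real
  assumes "c \<noteq> 0" "A \<in> sets borel"
  shows "(\<lambda>a. c * a - t) ` A \<in> sets borel"
proof -
  have eq: "(\<lambda>a. c * a - t) ` A = (\<lambda>x. (x + t) / c) -` A"
  proof (intro equalityI subsetI)
    fix x assume "x \<in> (\<lambda>a. c * a - t) ` A"
    then obtain a where "a \<in> A" "x = c * a - t" by auto
    then show "x \<in> (\<lambda>x. (x + t) / c) -` A" using assms(1) by auto
  next
    fix x assume "x \<in> (\<lambda>x. (x + t) / c) -` A"
    then have "(x + t) / c \<in> A" by auto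
    moreover have "x = c * ((x + t) / c) - t" using assms(1) by auto
    ultimately show "x \<in> (\<lambda>a. c * a - t) ` A" by blast
  qed
  have m: "(\<lambda>x. (x + t) / c) \<in> borel_measurable borel" by measurable
  have "(\<lambda>x. (x + t) / c) -` A \<inter> space borel \<in> sets borel"
    using measurable_sets[OF m assms(2)] by simp
  then show ?thesis using eq by simp
qed

lemma img_img_affine:
  fixes c d s t :: real
  shows "(\<lambda>a. d * a - s) ` ((\<lambda>a. c * a - t) ` A) = (\<lambda>a. (d*c) * a - (d*t + s)) ` A"
  by (auto simp: image_image algebra_simps)

lemma img_cball:
  fixes c t y r :: real
  assumes "c > 0"
  shows "(\<lambda>a. c * a - t) ` cball y r = cball (c*y - t) (c*r)"
proof (intro equalityI subsetI)
  fix x assume "x \<in> (\<lambda>a. c * a - t) ` cball y r"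
  then obtain a where a: "\<bar>y - a\<bar> \<le> r" "x = c * a - t" by (auto simp: dist_real_def)
  have "\<bar>c*y - t - x\<bar> = \<bar>c * (y - a)\<bar>" using a by (simp add: algebra_simps)
  also have "\<dots> = c * \<bar>y - a\<bar>" using assms by (simp add: abs_mult)
  also have "\<dots> \<le> c * r" using a assms by simp
  finally show "x \<in> cball (c*y - t) (c*r)" by (simp add: dist_real_def)
next
  fix x assume "x \<in> cball (c*y - t) (c*r)"
  then have h: "\<bar>c*y - t - x\<bar> \<le> c*r" by (simp add: dist_real_def)
  have "c*y - t - x = c * (y - (x+t)/c)" using assms by (simp add: field_simps)
  then have "\<bar>c*y - t - x\<bar> = c * \<bar>y - (x+t)/c\<bar>" using assms
    by (simp add: abs_mult)
  then have "\<bar>y - (x+t)/c\<bar> \<le> r" using h assms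
    by (metis mult_le_cancel_left_pos)
  moreover have "x = c * ((x+t)/c) - t" using assms by simp
  moreover have "(x+t)/c \<in> cball y r" using calculation(1) by (simp add: dist_real_def)
  ultimately show "x \<in> (\<lambda>a. c * a - t) ` cball y r" by (metis image_eqI)
qed

locale mu4 =
  fixes M :: "real measure"
  assumes ss: "self_similar_measure 3 4 (\<lambda>i. real (4 choose i) / 16) M"
begin

lemma ps: "prob_space M" using ss by (simp add: self_similar_measure_def)
lemma sets_M: "sets M = sets borel" using ss by (simp add: self_similar_measure_def)
lemma eqn: "A \<in> sets borel \<Longrightarrow> measure M A =
   (\<Sum>i\<le>4. real (4 choose i) / 16 * measure M ((\<lambda>a. 3 * a - real i) ` A))"
  using ss by (simp add: self_similar_measure_def)

lemma single:
  assumes "A \<in> sets borel" "i \<le> 4"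
  shows "measure M A \<ge> real (4 choose i) / 16 * measure M ((\<lambda>a. 3 * a - real i) ` A)"
proof -
  have "real (4 choose i) / 16 * measure M ((\<lambda>a. 3 * a - real i) ` A)
     \<le> (\<Sum>i\<le>4. real (4 choose i) / 16 * measure M ((\<lambda>a. 3 * a - real i) ` A))"
    by (rule member_le_sum) (use assms in auto)
  then show ?thesis using eqn[OF assms(1)] by simp
qed


sublocale prob_space M by (rule ps)

lemma spaceM[simp]: "space M = UNIV" using sets_M sets_eq_imp_space_eq by fastforce

lemma setsM_iff[simp]: "A \<in> sets M \<longleftrightarrow> A \<in> sets borel" using sets_M by simp

definition U :: "real \<Rightarrow> real set" where "U t = {x. x < -t} \<union> {x. 2 + t < x}"

lemma U_borel: "U t \<in> sets borel" unfolding U_def by measurable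

lemma U_zero: "measure M (U (R / 3^n)) = 0" if "K \<subseteq> cball 0 R" "emeasure M (- K) = 0" "R \<ge> 0" "closed K" for K R n
proof (induction n)
  case 0
  have "U R \<subseteq> - K"
  proof
    fix x assume "x \<in> U R"
    then have "\<bar>x\<bar> > R" using that(3) by (auto simp: U_def)
    then show "x \<in> - K" using that(1) by (auto simp: dist_real_def)
  qed
  moreover have "- K \<in> sets M"
    using that(4) by (simp add: borel_open open_Compl)
  ultimately have "emeasure M (U R) \<le> emeasure M (- K)" by (intro emeasure_mono) auto
  then have "emeasure M (U R) = 0" using that(2) by simp
  then show ?case by (simp add: measure_def)
next
  case (Suc n)
  define t where "t = R / 3^n"
  have t0: "t \<ge> 0" using that(3) by (simp add: t_def)
  have tt: "R / 3 ^ Suc n = t / 3" by (simp add: t_def)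
  have "measure M ((\<lambda>a. 3 * a - real i) ` U (t/3)) = 0" if "i \<le> 4" for i
  proof -
    have "(\<lambda>a. 3 * a - real i) ` U (t/3) \<subseteq> U t"
      using that t0 by (auto simp: U_def)
    then have "measure M ((\<lambda>a. 3 * a - real i) ` U (t/3)) \<le> measure M (U t)"
      by (intro finite_measure_mono) (use U_borel[of t] sets_M in auto)
    then show ?thesis using Suc.IH t_def measure_nonneg[of M] by (metis order_antisym)
  qed
  then have "measure M (U (t/3)) = 0"
    by (subst eqn) (simp_all add: U_borel)
  then show ?case by (simp only: tt)
qed

lemma null_outside:
  assumes "A \<in> sets borel" "A \<inter> {0..2} = {}"
  shows "measure M A = 0"
proof -
  obtain K where K: "compact K" "emeasure M (- K) = 0"
    using ss unfolding self_similar_measure_def by blast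
  have "bounded K" using K(1) by (rule compact_imp_bounded)
  then obtain R0 where "\<forall>y\<in>K. dist 0 y \<le> R0" unfolding bounded_any_center[where a=0] by blast
  then have "K \<subseteq> cball 0 R0" by auto
  define R where "R = max R0 1"
  have R: "K \<subseteq> cball 0 R" "R > 0"
    using \<open>K \<subseteq> cball 0 R0\<close> by (auto simp: R_def dist_real_def)
  have nul: "U (R / 3^n) \<in> null_sets M" for n
  proof -
    have "measure M (U (R / 3^n)) = 0" using U_zero[OF R(1) K(2)] R(2) compact_imp_closed[OF K(1)] by simp
    then have "emeasure M (U (R / 3^n)) = 0" by (simp add: emeasure_eq_measure)
    then show ?thesis by (simp add: U_borel null_setsI)
  qed
  have sub: "A \<subseteq> (\<Union>n. U (R / 3^n))"
  proof
    fix x assume "x \<in> A"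
    then have "x < 0 \<or> x > 2" using assms(2) by force
    then obtain d where d: "d > 0" "x < - d \<or> x > 2 + d"
    proof
      assume "x < 0" then show ?thesis using that[of "-x/2"] by auto
    next
      assume "x > 2"
      then have "2 + (x-2)/2 < x" by (simp add: field_simps)
      then show ?thesis using that[of "(x-2)/2"] \<open>x > 2\<close> by auto
    qed
    obtain n where n: "(1/3::real) ^ n < d / R" using real_arch_pow_inv[of "d/R" "1/3"] d R by auto
    have "R / 3^n = R * (1/3)^n" by (simp add: power_one_over)
    also have "\<dots> < R * (d / R)" using n R(2) by (intro mult_strict_left_mono) auto
    also have "\<dots> = d" using R by simp
    finally have "x \<in> U (R / 3^n)" using d by (auto simp: U_def)
    then show "x \<in> (\<Union>n. U (R / 3^n))" by blast
  qed
  have nU: "(\<Union>n. U (R / 3^n)) \<in> null_sets M" using nul by (rule null_sets_UN)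
  have AM: "A \<in> sets M" using assms(1) by simp
  have "A \<in> null_sets M" by (rule null_sets_subset[OF nU AM sub])
  then show ?thesis by (simp add: measure_eq_0_null_sets)
qed

lemma measure_02: "measure M (cball 1 1) = 1"
proof -
  have "measure M (UNIV - cball 1 1) = 0"
    by (rule null_outside) (auto simp: dist_real_def)
  moreover have "measure M (UNIV - cball 1 1) = 1 - measure M (cball 1 1)"
    using prob_compl[of "cball 1 1"] by simp
  ultimately show ?thesis by simp
qed

lemma measure_ge_02: "A \<in> sets borel \<Longrightarrow> {0..2} \<subseteq> A \<Longrightarrow> measure M A = 1"
proof -
  assume a: "A \<in> sets borel" "{0..2} \<subseteq> A"
  have "cball (1::real) 1 = {0..2}" by (auto simp: dist_real_def)
  then have "measure M {0..2} \<le> measure M A" using a by (intro finite_measure_mono) auto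
  then have "1 \<le> measure M A" using measure_02 \<open>cball (1::real) 1 = {0..2}\<close> by simp
  then show ?thesis using prob_le_1[of A] by linarith
qed

end

fun cnt :: "nat \<Rightarrow> nat \<Rightarrow> real" where
  "cnt 0 k = (if k = 0 then 1 else 0)"
| "cnt (Suc n) k = (\<Sum>i\<le>4. if i \<le> k \<and> (k - i) mod 3 = 0
        then real (4 choose i) * cnt n ((k - i) div 3) else 0)"

lemma sum4: "(\<Sum>i\<le>(4::nat). f i) = f 0 + f 1 + f 2 + f 3 + (f 4 :: real)"
  by (simp add: numeral_eq_Suc atMost_Suc)

lemma ch4: "(4::nat) choose 0 = 1" "(4::nat) choose 1 = 4" "(4::nat) choose 2 = 6"
  "(4::nat) choose 3 = 4" "(4::nat) choose 4 = 1"
  by (simp_all add: numeral_eq_Suc)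

lemma cnt_nonneg: "cnt n k \<ge> 0"
  by (induction n arbitrary: k) (auto intro!: sum_nonneg)

lemma cnt_zero: "2 * 3^n \<le> k + 1 \<Longrightarrow> cnt n k = 0"
proof (induction n arbitrary: k)
  case 0 then show ?case by simp
next
  case (Suc n)
  have "(if i \<le> k \<and> (k - i) mod 3 = 0 then real (4 choose i) * cnt n ((k - i) div 3) else 0) = 0"
    if "i \<le> 4" for i
  proof (cases "i \<le> k \<and> (k - i) mod 3 = 0")
    case True
    define N :: nat where "N = 3^n"
    have "2 * (3 * N) \<le> k + 1" using Suc.prems by (simp add: N_def)
    then have "2 * N \<le> (k - i) div 3 + 1" using True that by presburger
    then have "cnt n ((k - i) div 3) = 0" using Suc.IH N_def by simp
    then show ?thesis by simp
  next
    case False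
    then show ?thesis by auto
  qed
  then show ?case by simp
qed

lemma cnt_rec0: "q \<ge> 1 \<Longrightarrow> cnt (Suc n) (3*q) = cnt n q + 4 * cnt n (q - 1)"
proof -
  assume q: "q \<ge> 1"
  have a: "(3*q - 3) div 3 = q - 1" "(3 * q - 1) mod 3 \<noteq> 0" "(3 * q - 2) mod 3 \<noteq> 0" "\<not> (4 \<le> 3*q \<and> (3 * q - 4) mod 3 = 0)"
    using q by presburger+
  show ?thesis using q a by (auto simp: sum4 ch4)
qed

lemma cnt_rec1: "q \<ge> 1 \<Longrightarrow> cnt (Suc n) (3*q+1) = 4 * cnt n q + cnt n (q - 1)"
proof -
  assume q: "q \<ge> 1"
  have a: "(3*q + 1 - 4) div 3 = q - 1" "(3*q+1 - 4) mod 3 = 0" "(3 * q + 1 - 2) mod 3 \<noteq> 0" "(3 * q + 1 - 3) mod 3 \<noteq> 0"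
    "(3*q+1) mod 3 \<noteq> 0"
    using q by presburger+
  show ?thesis using q a by (simp add: sum4 ch4)
qed

lemma cnt_rec2: "q \<ge> 1 \<Longrightarrow> cnt (Suc n) (3*q+2) = 6 * cnt n q"
proof -
  assume q: "q \<ge> 1"
  have a: "(3 * q + 2 - 1) mod 3 \<noteq> 0" "(3 * q + 2 - 3) mod 3 \<noteq> 0" "(3*q+2 - 4) mod 3 \<noteq> 0"
    "(3*q+2) mod 3 \<noteq> 0"
    using q by presburger+
  show ?thesis using a q by (simp add: sum4 ch4)
qed

lemma cnt_pos: "k + 2 \<le> 2 * 3^n \<Longrightarrow> cnt n k > 0"
proof (induction n arbitrary: k)
  case 0 then show ?case by simp
next
  case (Suc n)
  define N :: nat where "N = 3^n"
  have N1: "N \<ge> 1" by (simp add: N_def)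
  have kb: "k + 2 \<le> 6 * N" using Suc.prems by (simp add: N_def)
  obtain i j where ij: "i \<le> 4" "k = 3*j + i" "j + 2 \<le> 2 * N"
  proof (cases "k div 3 + 2 \<le> 2 * N")
    case True
    then show ?thesis using that[of "k mod 3" "k div 3"] by auto
  next
    case False
    have "k mod 3 + 3 \<le> 4" "k = 3*(k div 3 - 1) + (k mod 3 + 3)" "k div 3 - 1 + 2 \<le> 2 * N"
      using False kb N1 by presburger+
    then show ?thesis using that[of "k mod 3 + 3" "k div 3 - 1"] by blast
  qed
  have pos: "cnt n j > 0" using Suc.IH ij(3) N_def by simp
  have "0 < (if i \<le> k \<and> (k - i) mod 3 = 0 then real (4 choose i) * cnt n ((k - i) div 3) else 0)"
    using ij pos by simp
  also have "\<dots> \<le> (\<Sum>i\<le>4. if i \<le> k \<and> (k - i) mod 3 = 0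
        then real (4 choose i) * cnt n ((k - i) div 3) else 0)"
    by (rule member_le_sum) (use ij(1) in \<open>auto intro!: mult_nonneg_nonneg cnt_nonneg\<close>)
  finally show ?case by simp
qed

lemma cnt_top: "cnt n (2 * 3^n - 2) = 1"
proof (induction n)
  case 0 then show ?case by simp
next
  case (Suc n)
  define N :: nat where "N = 3^n"
  have N1: "N \<ge> 1" by (simp add: N_def)
  have "2 * 3 ^ Suc n = 6 * N" by (simp add: N_def)
  then have e: "2 * 3 ^ Suc n - 2 = 3 * (2*N - 1) + 1" using N1 by linarith
  have "cnt (Suc n) (2 * 3 ^ Suc n - 2) = 4 * cnt n (2*N - 1) + cnt n (2*N - 1 - 1)"
    unfolding e using N1 by (intro cnt_rec1) simp
  also have "cnt n (2*N - 1) = 0" using N1 by (intro cnt_zero) (simp add: N_def)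
  also have "2*N - 1 - 1 = 2 * 3^n - 2" by (simp add: N_def)
  finally show ?case using Suc.IH by simp
qed

lemma cnt_bot: "cnt n 0 = 1"
  by (induction n) (simp_all add: sum4 ch4)


lemma reidx:
  fixes G h :: "nat \<Rightarrow> real" and i N :: nat
  assumes G0: "\<And>j. 2*N \<le> j + 1 \<Longrightarrow> G j = 0" and i4: "i \<le> 4"
  shows "(\<Sum>k<6*N. if i \<le> k \<and> (k - i) mod 3 = 0 then G ((k-i) div 3) * h k else 0)
       = (\<Sum>j<2*N. G j * h (3*j+i))"
proof -
  have "(\<Sum>k<6*N. if i \<le> k \<and> (k - i) mod 3 = 0 then G ((k-i) div 3) * h k else 0)
      = (\<Sum>k\<in>{k\<in>{..<6*N}. i \<le> k \<and> (k - i) mod 3 = 0}. G ((k-i) div 3) * h k)"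
    by (rule sum.inter_filter[symmetric]) simp
  also have "\<dots> = (\<Sum>j\<in>{j. 3*j+i < 6*N}. G j * h (3*j+i))"
  proof (rule sum.reindex_cong[where l = "\<lambda>j. 3*j+i"])
    show "inj_on (\<lambda>j. 3*j+i) {j. 3*j+i < 6*N}" by (auto simp: inj_on_def)
    show "{k\<in>{..<6*N}. i \<le> k \<and> (k - i) mod 3 = 0} = (\<lambda>j. 3*j+i) ` {j. 3*j+i < 6*N}"
    proof (intro equalityI subsetI)
      fix k assume "k \<in> {k\<in>{..<6*N}. i \<le> k \<and> (k - i) mod 3 = 0}"
      then have k: "k < 6*N" "i \<le> k" "(k-i) mod 3 = 0" by auto
      then have "k = 3 * ((k-i) div 3) + i" by presburger
      moreover have "3 * ((k-i) div 3) + i < 6*N" using k calculation by linarith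
      ultimately show "k \<in> (\<lambda>j. 3*j+i) ` {j. 3*j+i < 6*N}" by blast
    qed auto
    fix j assume "j \<in> {j. 3*j+i < 6*N}"
    show "G ((3*j+i-i) div 3) * h (3*j+i) = G j * h (3*j+i)" by simp
  qed
  also have "\<dots> = (\<Sum>j<2*N. G j * h (3*j+i))"
  proof (rule sum.mono_neutral_left)
    show "finite {..<2*N}" by simp
    show "{j. 3*j+i < 6*N} \<subseteq> {..<2*N}" by auto
    show "\<forall>j\<in>{..<2*N} - {j. 3*j+i < 6*N}. G j * h (3*j+i) = 0"
    proof
      fix j assume "j \<in> {..<2*N} - {j. 3*j+i < 6*N}"
      then have "2*N \<le> j + 1" using i4 by auto
      then show "G j * h (3*j+i) = 0" using G0 by simp
    qed
  qed
  finally show ?thesis .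
qed

context mu4 begin

lemma decomp:
  assumes A: "A \<in> sets borel"
  shows "measure M A = (\<Sum>j<2*3^n. cnt n j / 16^n * measure M ((\<lambda>a. 3^n * a - real j) ` A))"
proof (induction n)
  case 0
  have "{..<2::nat} = {0,1}" by auto
  then show ?case by simp
next
  case (Suc n)
  define N :: nat where "N = 3^n"
  define h where "h k = measure M ((\<lambda>a. 3^(Suc n) * a - real k) ` A)" for k :: nat
  have img: "(\<lambda>a. 3 * a - real i) ` ((\<lambda>a. 3^n * a - real j) ` A) = (\<lambda>a. 3^(Suc n) * a - real (3*j+i)) ` A"
    for i j
    by (simp add: img_img_affine)
  have inner: "measure M ((\<lambda>a. 3^n * a - real j) ` A) = (\<Sum>i\<le>4. real (4 choose i) / 16 * h (3*j+i))" for j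
  proof -
    have "(\<lambda>a. 3^n * a - real j) ` A \<in> sets borel" by (rule img_affine_borel) (use A in auto)
    then show ?thesis by (subst eqn) (simp_all add: img h_def)
  qed
  have "measure M A = (\<Sum>j<2*N. cnt n j / 16^n * (\<Sum>i\<le>4. real (4 choose i) / 16 * h (3*j+i)))"
    using Suc.IH by (simp add: inner N_def)
  also have "\<dots> = (\<Sum>j<2*N. \<Sum>i\<le>4. (real (4 choose i) * cnt n j / 16^(Suc n)) * h (3*j+i))"
    by (simp add: sum_distrib_left mult_ac)
  also have "\<dots> = (\<Sum>i\<le>4. \<Sum>j<2*N. (real (4 choose i) * cnt n j / 16^(Suc n)) * h (3*j+i))"
    by (rule sum.swap)
  also have "\<dots> = (\<Sum>i\<le>4. \<Sum>k<6*N. if i \<le> k \<and> (k - i) mod 3 = 0 then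
        (real (4 choose i) * cnt n ((k-i) div 3) / 16^(Suc n)) * h k else 0)"
  proof (rule sum.cong[OF refl])
    fix i :: nat assume "i \<in> {..4}"
    then show "(\<Sum>j<2*N. (real (4 choose i) * cnt n j / 16^(Suc n)) * h (3*j+i)) =
      (\<Sum>k<6*N. if i \<le> k \<and> (k - i) mod 3 = 0 then
        (real (4 choose i) * cnt n ((k-i) div 3) / 16^(Suc n)) * h k else 0)"
      using reidx[of N "\<lambda>j. real (4 choose i) * cnt n j / 16^(Suc n)" i h] cnt_zero[of n] N_def
      by auto
  qed
  also have "\<dots> = (\<Sum>k<6*N. \<Sum>i\<le>4. if i \<le> k \<and> (k - i) mod 3 = 0 then
        (real (4 choose i) * cnt n ((k-i) div 3) / 16^(Suc n)) * h k else 0)"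
    by (rule sum.swap)
  also have "\<dots> = (\<Sum>k<6*N. cnt (Suc n) k / 16^(Suc n) * h k)"
  proof (rule sum.cong[OF refl])
    fix k
    have "cnt (Suc n) k / 16^(Suc n) * h k = (\<Sum>i\<le>4. (if i \<le> k \<and> (k - i) mod 3 = 0
        then real (4 choose i) * cnt n ((k - i) div 3) else 0) / 16^(Suc n) * h k)"
      by (simp only: cnt.simps sum_distrib_right sum_divide_distrib)
    also have "\<dots> = (\<Sum>i\<le>4. if i \<le> k \<and> (k - i) mod 3 = 0 then
        (real (4 choose i) * cnt n ((k-i) div 3) / 16^(Suc n)) * h k else 0)"
      by (rule sum.cong) auto
    finally show "(\<Sum>i\<le>4. if i \<le> k \<and> (k - i) mod 3 = 0 then
        (real (4 choose i) * cnt n ((k-i) div 3) / 16^(Suc n)) * h k else 0) = cnt (Suc n) k / 16^(Suc n) * h k"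
      by simp
  qed
  also have "6 * N = 2 * 3^Suc n" by (simp add: N_def)
  finally show ?case by (simp add: h_def)
qed

end

declare cnt.simps(2)[simp del]

lemma cnt_rec2': "cnt (Suc n) (3*q+2) = 6 * cnt n q"
proof -
  have a: "(3 * q + 2 - 1) mod 3 \<noteq> 0" "3 \<le> 3*q+2 \<longrightarrow> (3 * q + 2 - 3) mod 3 \<noteq> 0"
    "4 \<le> 3*q+2 \<longrightarrow> (3*q+2 - 4) mod 3 \<noteq> 0" "(3*q+2) mod 3 \<noteq> 0"
    by presburger+
  show ?thesis using a by (auto simp: sum4 ch4 cnt.simps)
qed

lemma cnt_rec1s[simp]: "q \<ge> 1 \<Longrightarrow> cnt (Suc n) (Suc (3*q)) = 4 * cnt n q + cnt n (q - 1)"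
  using cnt_rec1[of q n] by simp

lemma cnt_rec2s[simp]: "cnt (Suc n) (Suc (Suc (3*q))) = 6 * cnt n q"
  using cnt_rec2'[of n q] by simp

lemma cnt_rec0s[simp]: "q \<ge> 1 \<Longrightarrow> cnt (Suc n) (3*q) = cnt n q + 4 * cnt n (q - 1)"
  using cnt_rec0[of q n] by simp

definition cc :: "nat \<Rightarrow> nat" where "cc n = (3^n - 1) div 2"
definition cc' :: "nat \<Rightarrow> nat" where "cc' n = (3^(n+1) - 1) div 2"

lemma odd3: "odd ((3::nat)^n)" by simp

lemma cc_Suc: "cc (Suc n) = 3 * cc n + 1"
proof -
  obtain t where t: "3^n = 2*t + (1::nat)" using odd3[of n] oddE by blast
  show ?thesis unfolding cc_def using t by simp
qed

lemma cc'_Suc: "cc' (Suc n) = 3 * cc' n + 1"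
proof -
  obtain t where t: "3^(n+1) = 2*t + (1::nat)" using odd3[of "n+1"] oddE by blast
  have "3^(Suc n + 1) = 3 * (2*t+1::nat)" using t by simp
  then show ?thesis unfolding cc'_def using t by simp
qed

lemma cc_ge1: "n \<ge> 1 \<Longrightarrow> cc n \<ge> 1"
proof (induction n rule: nat_induct_at_least)
  case base then show ?case by (simp add: cc_def)
next
  case (Suc n) then show ?case by (simp add: cc_Suc)
qed

lemma cc_le: "cc n < cc' n"
proof -
  obtain t where t: "3^n = 2*t + (1::nat)" using odd3[of n] oddE by blast
  have "3^(n+1) = 3*(2*t+1::nat)" using t by simp
  then show ?thesis unfolding cc_def cc'_def using t by simp
qed

definition PP :: "nat \<Rightarrow> nat \<Rightarrow> bool" where
  "PP n j \<longleftrightarrow> (let a = cnt n j; b = cnt n (j - 1) in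
     (j = cc n \<and> a + b = 5^n \<and> b \<le> a) \<or> (j = cc' n \<and> a + b = 5^n \<and> a \<le> b) \<or>
     (2*a \<le> 3*b \<and> 2*b \<le> 3*a \<and> a + b \<ge> 5^n \<and> a + 10*b \<ge> 5^(n+1) \<and> 10*a + b \<ge> 5^(n+1)))"

lemma cnt1: "cnt 1 0 = 1" "cnt 1 1 = 4" "cnt 1 2 = 6" "cnt 1 3 = 4" "cnt 1 4 = 1"
  by (simp only: One_nat_def cnt.simps sum4; simp add: ch4 cnt.simps)+

lemma cnt1': "cnt (Suc 0) 0 = 1" "cnt (Suc 0) (Suc 0) = 4" "cnt (Suc 0) 2 = 6" "cnt (Suc 0) 3 = 4" "cnt (Suc 0) 4 = 1"
  using cnt1 by simp_all

lemma PP_main: "n \<ge> 1 \<Longrightarrow> cc n \<le> j \<Longrightarrow> j \<le> cc' n \<Longrightarrow> PP n j"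
proof (induction n arbitrary: j rule: nat_induct_at_least)
  case base
  have c: "cc 1 = 1" "cc' 1 = 4" by (simp_all add: cc_def cc'_def)
  then have "j \<in> {1,2,3,4}" using base by auto
  then show ?case using c by (auto simp: PP_def cnt1 cnt1' Let_def)
next
  case (Suc n k)
  define q where "q = k div 3"
  define r where "r = k mod 3"
  have k: "k = 3*q + r" "r < 3" by (simp_all add: q_def r_def)
  have q1: "cc n \<le> q" "q \<le> cc' n" using Suc.prems k by (simp_all add: cc_Suc cc'_Suc)
  have qge: "q \<ge> 1" using cc_ge1[OF Suc.hyps(1)] q1 by simp
  have IH: "PP n q" using Suc.IH q1 by simp
  define a where "a = cnt n q"
  define b where "b = cnt n (q - 1)"
  have a0: "a \<ge> 0" "b \<ge> 0" by (simp_all add: a_def b_def cnt_nonneg)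
  define N :: real where "N = 5^n"
  have P: "(q = cc n \<and> a + b = N \<and> b \<le> a) \<or> (q = cc' n \<and> a + b = N \<and> a \<le> b) \<or>
     (2*a \<le> 3*b \<and> 2*b \<le> 3*a \<and> a + b \<ge> N \<and> a + 10*b \<ge> 5*N \<and> 10*a + b \<ge> 5*N)"
    using IH unfolding PP_def Let_def a_def[symmetric] b_def[symmetric] N_def by simp
  have N5: "(5::real)^(Suc n) = 5*N" "(5::real)^(Suc n + 1) = 25*N"
    by (simp_all add: N_def)
  have "r = 0 \<or> r = 1 \<or> r = 2" using k by auto
  then show ?case
  proof (elim disjE)
    assume r0: "r = 0"
    have qc: "q \<noteq> cc n" using Suc.prems k r0 by (auto simp: cc_Suc)
    have q2: "q - 1 \<ge> 1" using qc q1 qge cc_ge1[OF Suc.hyps(1)] by linarith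
    have e1: "cnt (Suc n) k = a + 4 * b" using k r0 qge by (simp add: a_def b_def)
    have "k - 1 = 3 * (q - 1) + 2" using k r0 qge by simp
    then have e2: "cnt (Suc n) (k - 1) = 6 * b" using cnt_rec2'[of n "q-1"] by (simp add: b_def)
    have H: "2*(a+4*b) \<le> 3*(6*b) \<and> 2*(6*b) \<le> 3*(a+4*b) \<and> (a+4*b)+6*b \<ge> 5*N \<and>
      (a+4*b) + 10*(6*b) \<ge> 25*N \<and> 10*(a+4*b) + 6*b \<ge> 25*N"
    proof -
      have "(a + b = N \<and> a \<le> b) \<or>
        (2*a \<le> 3*b \<and> 2*b \<le> 3*a \<and> a + b \<ge> N \<and> a + 10*b \<ge> 5*N \<and> 10*a + b \<ge> 5*N)"
        using P qc by blast
      then show ?thesis using a0 by argo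
    qed
    show ?thesis unfolding PP_def Let_def e1 e2 N5 using H by blast
  next
    assume r1: "r = 1"
    have e1: "cnt (Suc n) k = 4 * a + b" using k r1 qge by (simp add: a_def b_def)
    have "k - 1 = 3 * q" using k r1 by simp
    then have e2: "cnt (Suc n) (k - 1) = a + 4 * b" using qge by (simp add: a_def b_def)
    have kc: "q = cc n \<Longrightarrow> k = cc (Suc n)" "q = cc' n \<Longrightarrow> k = cc' (Suc n)"
      using k r1 by (simp_all add: cc_Suc cc'_Suc)
    have H: "(k = cc (Suc n) \<and> (4*a+b) + (a+4*b) = 5*N \<and> a+4*b \<le> 4*a+b) \<or>
      (k = cc' (Suc n) \<and> (4*a+b) + (a+4*b) = 5*N \<and> 4*a+b \<le> a+4*b) \<or>
      (2*(4*a+b) \<le> 3*(a+4*b) \<and> 2*(a+4*b) \<le> 3*(4*a+b) \<and> (4*a+b)+(a+4*b) \<ge> 5*N \<and>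
      (4*a+b) + 10*(a+4*b) \<ge> 25*N \<and> 10*(4*a+b) + (a+4*b) \<ge> 25*N)"
    proof -
      consider "q = cc n \<and> a + b = N \<and> b \<le> a" | "q = cc' n \<and> a + b = N \<and> a \<le> b" |
        "2*a \<le> 3*b \<and> 2*b \<le> 3*a \<and> a + b \<ge> N \<and> a + 10*b \<ge> 5*N \<and> 10*a + b \<ge> 5*N"
        using P by blast
      then show ?thesis
      proof cases
        case 1 then show ?thesis using kc(1) by auto
      next
        case 2 then show ?thesis using kc(2) by auto
      next
        case 3
        then have "2*(4*a+b) \<le> 3*(a+4*b) \<and> 2*(a+4*b) \<le> 3*(4*a+b) \<and> (4*a+b)+(a+4*b) \<ge> 5*N \<and>
          (4*a+b) + 10*(a+4*b) \<ge> 25*N \<and> 10*(4*a+b) + (a+4*b) \<ge> 25*N"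
          by argo
        then show ?thesis by blast
      qed
    qed
    show ?thesis unfolding PP_def Let_def e1 e2 N5 using H by blast
  next
    assume r2: "r = 2"
    have qc: "q \<noteq> cc' n" using Suc.prems k r2 by (auto simp: cc'_Suc)
    have e1: "cnt (Suc n) k = 6 * a" using k r2 cnt_rec2'[of n q] by (simp add: a_def)
    have "k - 1 = 3 * q + 1" using k r2 by simp
    then have e2: "cnt (Suc n) (k - 1) = 4 * a + b" using qge by (simp add: a_def b_def)
    have H: "2*(6*a) \<le> 3*(4*a+b) \<and> 2*(4*a+b) \<le> 3*(6*a) \<and> (6*a)+(4*a+b) \<ge> 5*N \<and>
      (6*a) + 10*(4*a+b) \<ge> 25*N \<and> 10*(6*a) + (4*a+b) \<ge> 25*N"
    proof -
      have "(a + b = N \<and> b \<le> a) \<or>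
        (2*a \<le> 3*b \<and> 2*b \<le> 3*a \<and> a + b \<ge> N \<and> a + 10*b \<ge> 5*N \<and> 10*a + b \<ge> 5*N)"
        using P qc by blast
      then show ?thesis using a0 by argo
    qed
    show ?thesis unfolding PP_def Let_def e1 e2 N5 using H by blast
  qed
qed

lemma cnt_lower: "cc n \<le> j \<Longrightarrow> j \<le> cc' n \<Longrightarrow> cnt n j + cnt n (j - 1) \<ge> 5^n"
proof (cases "n = 0")
  case True
  assume "cc n \<le> j" "j \<le> cc' n"
  then have "j = 0 \<or> j = 1" using True by (auto simp: cc'_def)
  then show ?thesis using True by auto
next
  case False
  assume j: "cc n \<le> j" "j \<le> cc' n"
  have "PP n j" using PP_main[OF _ j] False by simp
  then show ?thesis unfolding PP_def Let_def using cnt_nonneg[of n j] cnt_nonneg[of n "j-1"] by auto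
qed

lemma cnt_center: "n \<ge> 1 \<Longrightarrow> cnt n (cc n) + cnt n (cc n - 1) = 5^n"
proof (induction n rule: nat_induct_at_least)
  case base then show ?case by (simp add: cc_def cnt1 cnt1')
next
  case (Suc n)
  have q: "cc n \<ge> 1" using cc_ge1[OF Suc.hyps(1)] .
  have "cnt (Suc n) (cc (Suc n)) = 4 * cnt n (cc n) + cnt n (cc n - 1)"
    using q by (simp add: cc_Suc cnt_rec1)
  moreover have "cnt (Suc n) (cc (Suc n) - 1) = cnt n (cc n) + 4 * cnt n (cc n - 1)"
    using q by (simp add: cc_Suc cnt_rec0)
  ultimately show ?case using Suc.IH by simp
qed

lemma cnt_window: "n \<ge> 1 \<Longrightarrow> j + 2 \<ge> cc (Suc n) \<Longrightarrow> j \<le> cc (Suc n) + 1 \<Longrightarrow> cnt (Suc n) j \<le> 6 * 5^n"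
proof -
  assume n: "n \<ge> 1" and j: "j + 2 \<ge> cc (Suc n)" "j \<le> cc (Suc n) + 1"
  define c where "c = cc n"
  have c1: "c \<ge> 1" using cc_ge1[OF n] by (simp add: c_def)
  define a where "a = cnt n c"
  define b where "b = cnt n (c - 1)"
  have ab: "a + b = 5^n" "a \<ge> 0" "b \<ge> 0" using cnt_center[OF n] cnt_nonneg
    by (simp_all add: a_def b_def c_def)
  have "j = 3*(c-1)+2 \<or> j = 3*c \<or> j = 3*c+1 \<or> j = 3*c+2" using j c1 by (simp add: cc_Suc c_def[symmetric]) linarith
  then show ?thesis
  proof (elim disjE)
    assume "j = 3*(c-1)+2" then show ?thesis using ab cnt_rec2'[of n "c-1"] by (simp add: b_def)
  next
    assume "j = 3*c" then show ?thesis using ab c1 by (simp add: cnt_rec0 a_def b_def)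
  next
    assume "j = 3*c+1" then show ?thesis using ab c1 cnt_rec1[of c n] by (simp add: a_def b_def)
  next
    assume "j = 3*c+2" then show ?thesis using ab c1 by (simp add: cnt_rec2' a_def)
  qed
qed


lemma scale_n:
  fixes r s :: real
  assumes "0 < r" "r \<le> s"
  shows "\<exists>n. s / 3^(n+1) < r \<and> r \<le> s / 3^n"
proof -
  have s0: "s > 0" using assms by simp
  obtain N where N: "(1/3::real)^N < r / s" using real_arch_pow_inv[of "r/s" "1/3"] assms s0 by auto
  have PN: "s / 3^N < r"
  proof -
    have "s / 3^N = s * (1/3)^N" by (simp add: power_one_over)
    also have "\<dots> < s * (r / s)" using N s0 by (intro mult_strict_left_mono) auto
    also have "\<dots> = r" using s0 by simp
    finally show ?thesis .
  qed
  obtain k where k: "k \<le> N" "\<forall>i<k. \<not> (s / 3^i < r)" "s / 3^k < r"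
    using ex_least_nat_le[of "\<lambda>i. s / 3^i < r", OF PN] by blast
  have "k \<noteq> 0" using k(3) assms by (cases k) auto
  then obtain n where n: "k = n + 1" by (cases k) auto
  have "r \<le> s / 3^n" using k(2) n by (metis less_add_one not_less)
  then show ?thesis using k(3) n by blast
qed

definition dimexp :: "real \<Rightarrow> real" where "dimexp \<rho> = - ln \<rho> / ln 3"

lemma log_lower:
  fixes f :: "real \<Rightarrow> real" and s C \<rho> :: real
  assumes s: "s > 0" and C: "C > 0" and \<rho>: "0 < \<rho>" "\<rho> \<le> 1"
    and mono: "\<And>r t. 0 < r \<Longrightarrow> r \<le> t \<Longrightarrow> f r \<le> f t"
    and lb: "\<And>n. f (s / 3^n) \<ge> C * \<rho>^n"
  shows "\<exists>K. \<forall>r. 0 < r \<and> r \<le> s \<longrightarrow> ln (f r) \<ge> dimexp \<rho> * ln r - K"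
proof -
  define \<alpha> where "\<alpha> = dimexp \<rho>"
  have l3: "ln (3::real) > 0" by simp
  have "ln \<rho> \<le> 0" using \<rho> by simp
  then have "ln \<rho> / ln 3 \<le> 0" using l3 by (simp add: divide_nonpos_pos)
  then have a0: "\<alpha> \<ge> 0" by (simp add: \<alpha>_def dimexp_def)
  have lr: "ln \<rho> = - \<alpha> * ln 3" using l3 by (simp add: \<alpha>_def dimexp_def)
  show ?thesis
  proof (intro exI allI impI)
    fix r assume r: "0 < r \<and> r \<le> s"
    obtain n where n: "s / 3^(n+1) < r" "r \<le> s / 3^n" using scale_n r by blast
    have pos: "C * \<rho>^(n+1) > 0" using C \<rho> by simp
    have "C * \<rho>^(n+1) \<le> f (s / 3^(n+1))" by (rule lb)
    also have "\<dots> \<le> f r" using n s by (intro mono) auto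
    finally have fr: "C * \<rho>^(n+1) \<le> f r" .
    have "ln (C * \<rho>^(n+1)) \<le> ln (f r)" using fr pos by simp
    moreover have "ln (C * \<rho>^(n+1)) = ln C + (n+1) * ln \<rho>" using C \<rho> by (simp add: ln_mult ln_realpow algebra_simps)
    ultimately have A: "ln (f r) \<ge> ln C - (n+1) * \<alpha> * ln 3" using lr by (simp add: algebra_simps)
    have "ln r \<le> ln (s / 3^n)" using r n by simp
    also have "ln (s / 3^n) = ln s - n * ln 3" using s by (simp add: ln_div ln_realpow)
    finally have "\<alpha> * ln r \<le> \<alpha> * (ln s - n * ln 3)" using a0 by (simp add: mult_left_mono)
    then show "ln (f r) \<ge> dimexp \<rho> * ln r - (\<alpha> * ln 3 + \<alpha> * ln s - ln C)"
      using A unfolding \<alpha>_def[symmetric] by (simp add: algebra_simps)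
  qed
qed

lemma log_upper:
  fixes f :: "real \<Rightarrow> real" and s D \<rho> :: real
  assumes s: "s > 0" and D: "D > 0" and \<rho>: "0 < \<rho>" "\<rho> \<le> 1"
    and mono: "\<And>r t. 0 < r \<Longrightarrow> r \<le> t \<Longrightarrow> f r \<le> f t"
    and pos: "\<And>r. 0 < r \<Longrightarrow> f r > 0"
    and ub: "\<And>n. f (s / 3^n) \<le> D * \<rho>^n"
  shows "\<exists>K. \<forall>r. 0 < r \<and> r \<le> s \<longrightarrow> ln (f r) \<le> dimexp \<rho> * ln r + K"
proof -
  define \<alpha> where "\<alpha> = dimexp \<rho>"
  have l3: "ln (3::real) > 0" by simp
  have "ln \<rho> \<le> 0" using \<rho> by simp
  then have "ln \<rho> / ln 3 \<le> 0" using l3 by (simp add: divide_nonpos_pos)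
  then have a0: "\<alpha> \<ge> 0" by (simp add: \<alpha>_def dimexp_def)
  have lr: "ln \<rho> = - \<alpha> * ln 3" using l3 by (simp add: \<alpha>_def dimexp_def)
  show ?thesis
  proof (intro exI allI impI)
    fix r assume r: "0 < r \<and> r \<le> s"
    obtain n where n: "s / 3^(n+1) < r" "r \<le> s / 3^n" using scale_n r by blast
    have "f r \<le> f (s / 3^n)" using n r by (intro mono) auto
    also have "\<dots> \<le> D * \<rho>^n" by (rule ub)
    finally have fr: "f r \<le> D * \<rho>^n" .
    have "f r > 0" using pos r by simp
    then have "ln (f r) \<le> ln (D * \<rho>^n)" using fr by simp
    moreover have "ln (D * \<rho>^n) = ln D + n * ln \<rho>" using D \<rho> by (simp add: ln_mult ln_realpow)
    ultimately have A: "ln (f r) \<le> ln D - n * \<alpha> * ln 3" using lr by (simp add: algebra_simps)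
    have "ln (s / 3^(n+1)) \<le> ln r" using r n s by simp
    moreover have "ln (s / 3^(n+1)) = ln s - (n+1) * ln 3"
    proof -
      have "ln ((3::real)^(n+1)) = real (n+1) * ln 3" by (rule ln_realpow) 
      moreover have "ln (s / 3^(n+1)) = ln s - ln ((3::real)^(n+1))" using s by (simp add: ln_div)
      ultimately show ?thesis by simp
    qed
    ultimately have "\<alpha> * (ln s - (n+1) * ln 3) \<le> \<alpha> * ln r" using a0 by (simp add: mult_left_mono)
    then show "ln (f r) \<le> dimexp \<rho> * ln r + (ln D + \<alpha> * ln 3 - \<alpha> * ln s)"
      using A unfolding \<alpha>_def[symmetric] by (simp add: algebra_simps)
  qed
qed

lemma ln_div_ln_infty: "((\<lambda>r. K / ln r) \<longlongrightarrow> (0::real)) (at_right 0)"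
proof -
  have "LIM r at_right 0. ln (r::real) :> at_infinity"
    using ln_at_0 at_bot_le_at_infinity filterlim_mono by blast
  then show ?thesis by (intro tendsto_divide_0[OF tendsto_const])
qed

lemma dim_from_bounds:
  fixes f :: "real \<Rightarrow> real"
  assumes s: "s > 0" and K: "\<forall>r. 0 < r \<and> r \<le> s \<longrightarrow> \<bar>ln (f r) - \<alpha> * ln r\<bar> \<le> K"
  shows "((\<lambda>r. ln (f r) / ln r) \<longlongrightarrow> \<alpha>) (at_right 0)"
proof -
  define s' where "s' = min s (1/2)"
  have s': "s' > 0" "s' \<le> s" "s' < 1" using s by (auto simp: s'_def)
  have ev: "eventually (\<lambda>r. r \<in> {0<..<s'}) (at_right 0)" using eventually_at_right_real s' by blast
  have g0: "((\<lambda>r. (ln (f r) - \<alpha> * ln r) / ln r) \<longlongrightarrow> 0) (at_right 0)"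
  proof (rule Lim_null_comparison)
    show "eventually (\<lambda>r. norm ((ln (f r) - \<alpha> * ln r) / ln r) \<le> K / (- ln r)) (at_right 0)"
      using ev
    proof (rule eventually_mono)
      fix r assume r: "r \<in> {0<..<s'}"
      then have lr: "ln r < 0" using s' by simp
      have "norm ((ln (f r) - \<alpha> * ln r) / ln r) = \<bar>ln (f r) - \<alpha> * ln r\<bar> / (- ln r)"
        using lr by (simp add: abs_div)
      also have "\<dots> \<le> K / (- ln r)" using K r s' lr by (intro divide_right_mono) auto
      finally show "norm ((ln (f r) - \<alpha> * ln r) / ln r) \<le> K / (- ln r)" .
    qed
    show "((\<lambda>r. K / (- ln r)) \<longlongrightarrow> 0) (at_right 0)"
      using ln_div_ln_infty[of "-K"] by simp
  qed
  have L: "((\<lambda>r. (ln (f r) - \<alpha> * ln r) / ln r + \<alpha>) \<longlongrightarrow> \<alpha>) (at_right 0)"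
    using tendsto_add[OF g0 tendsto_const[of \<alpha>]] by simp
  have E: "eventually (\<lambda>r. (ln (f r) - \<alpha> * ln r) / ln r + \<alpha> = ln (f r) / ln r) (at_right 0)"
      using ev
    proof (rule eventually_mono)
      fix r assume r: "r \<in> {0<..<s'}"
      then have "ln r < 0" using s' by simp
      then show "(ln (f r) - \<alpha> * ln r) / ln r + \<alpha> = ln (f r) / ln r" by (simp add: field_simps)
    qed
  show ?thesis by (rule Lim_transform_eventually[OF L E])
qed

lemma dim_le_from_lower:
  fixes f :: "real \<Rightarrow> real"
  assumes s: "s > 0" and K: "\<forall>r. 0 < r \<and> r \<le> s \<longrightarrow> ln (f r) \<ge> \<alpha> * ln r - K"
    and lim: "((\<lambda>r. ln (f r) / ln r) \<longlongrightarrow> a) (at_right 0)"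
  shows "a \<le> \<alpha>"
proof -
  define s' where "s' = min s (1/2)"
  have s': "s' > 0" "s' \<le> s" "s' < 1" using s by (auto simp: s'_def)
  have ev: "eventually (\<lambda>r. r \<in> {0<..<s'}) (at_right 0)" using eventually_at_right_real s' by blast
  have lim2: "((\<lambda>r. \<alpha> - K / ln r) \<longlongrightarrow> \<alpha> - 0) (at_right 0)"
    by (intro tendsto_diff tendsto_const ln_div_ln_infty)
  show ?thesis
  proof (rule tendsto_le[OF _ lim2[simplified] lim])
    show "at_right (0::real) \<noteq> bot" by simp
    show "eventually (\<lambda>r. ln (f r) / ln r \<le> \<alpha> - K / ln r) (at_right 0)"
      using ev
    proof (rule eventually_mono)
      fix r assume r: "r \<in> {0<..<s'}"
      then have lr: "ln r < 0" using s' by simp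
      have "\<alpha> * ln r - K \<le> ln (f r)" using K r s' by auto
      then have "ln (f r) / ln r \<le> (\<alpha> * ln r - K) / ln r" using lr by (simp add: divide_right_mono_neg)
      also have "\<dots> = \<alpha> - K / ln r" using lr by (simp add: field_simps)
      finally show "ln (f r) / ln r \<le> \<alpha> - K / ln r" .
    qed
  qed
qed


lemma cc_eq: "2 * cc n + 1 = 3^n"
proof -
  obtain t where t: "3^n = 2*t + (1::nat)" using odd3[of n] oddE by blast
  show ?thesis unfolding cc_def using t by simp
qed

lemma cc'_eq: "2 * cc' n + 1 = 3^(n+1)"
proof -
  obtain t where t: "3^(n+1) = 2*t + (1::nat)" using odd3[of "n+1"] oddE by blast
  show ?thesis unfolding cc'_def using t by simp
qed

lemma cc_real: "real (cc n) = (3^n - 1) / 2"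
proof -
  have "real (2 * cc n + 1) = real (3^n)" using cc_eq[of n] by simp
  then show ?thesis by simp
qed

lemma cc'_real: "real (cc' n) = (3 * 3^n - 1) / 2"
proof -
  have "real (2 * cc' n + 1) = real (3^(n+1))" using cc'_eq[of n] by simp
  then show ?thesis by simp
qed

context mu4 begin

lemma mono_borel: "A \<subseteq> B \<Longrightarrow> B \<in> sets borel \<Longrightarrow> measure M A \<le> measure M B"
  by (rule finite_measure_mono) simp_all

lemma mono_cball: "cball x r \<subseteq> cball y t \<Longrightarrow> measure M (cball x r) \<le> measure M (cball y t)"
  by (rule mono_borel) simp_all

lemma single_cball:
  assumes "i \<le> 4"
  shows "measure M (cball y r) \<ge> real (4 choose i) / 16 * measure M (cball (3*y - real i) (3*r))"
proof -
  have "(\<lambda>a. 3 * a - real i) ` cball y r = cball (3*y - real i) (3*r)"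
    by (rule img_cball) simp
  then show ?thesis using single[of "cball y r" i] assms by simp
qed

lemma pos_left: "measure M (cball (1/2) (1/2)) \<ge> 1/16"
proof -
  have "measure M (cball (1/2) (1/2)) \<ge> real (4 choose 0) / 16 * measure M (cball (3*(1/2) - real 0) (3*(1/2)))"
    by (rule single_cball) simp
  moreover have "measure M (cball (3*(1/2) - real 0) (3*(1/2::real))) = 1"
    by (rule measure_ge_02) (auto simp: dist_real_def abs_if)
  ultimately show ?thesis by simp
qed

lemma pos_right: "measure M (cball (3/2) (1/2)) \<ge> 1/16"
proof -
  have "measure M (cball (3/2) (1/2)) \<ge> real (4 choose 4) / 16 * measure M (cball (3*(3/2) - real 4) (3*(1/2)))"
    by (rule single_cball) simp
  moreover have "measure M (cball (3*(3/2) - real 4) (3*(1/2::real))) = 1"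
    by (rule measure_ge_02) (auto simp: dist_real_def abs_if)
  ultimately show ?thesis by simp
qed

lemma pos_0: "measure M (cball 0 (1/2)) \<ge> 1/256"
proof -
  have a: "measure M (cball 0 (1/2)) \<ge> real (4 choose 0) / 16 * measure M (cball (3*0 - real 0) (3*(1/2)))"
    by (rule single_cball) simp
  have b: "measure M (cball 0 (3/2)) \<ge> real (4 choose 0) / 16 * measure M (cball (3*0 - real 0) (3*(3/2)))"
    by (rule single_cball) simp
  have c: "measure M (cball (3*0 - real 0) (3*(3/2::real))) = 1"
    by (rule measure_ge_02) (auto simp: dist_real_def abs_if)
  show ?thesis using a b c by simp
qed

lemma pos_2: "measure M (cball 2 (1/2)) \<ge> 1/256"
proof -
  have a: "measure M (cball 2 (1/2)) \<ge> real (4 choose 4) / 16 * measure M (cball (3*2 - real 4) (3*(1/2)))"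
    by (rule single_cball) simp
  have b: "measure M (cball 2 (3/2)) \<ge> real (4 choose 4) / 16 * measure M (cball (3*2 - real 4) (3*(3/2)))"
    by (rule single_cball) simp
  have c: "measure M (cball (3*2 - real 4) (3*(3/2::real))) = 1"
    by (rule measure_ge_02) (auto simp: dist_real_def abs_if)
  show ?thesis using a b c by simp
qed

lemma decomp_term_nonneg: "0 \<le> cnt n j / 16^n * measure M B"
  by (simp add: cnt_nonneg)

lemma decomp_ge:
  assumes "A \<in> sets borel" "j < 2*3^n"
  shows "measure M A \<ge> cnt n j / 16^n * measure M ((\<lambda>a. 3^n * a - real j) ` A)"
proof -
  have "cnt n j / 16^n * measure M ((\<lambda>a. 3^n * a - real j) ` A) \<le>
     (\<Sum>j<2*3^n. cnt n j / 16^n * measure M ((\<lambda>a. 3^n * a - real j) ` A))"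
    by (rule member_le_sum) (use assms in \<open>auto intro!: divide_nonneg_nonneg mult_nonneg_nonneg cnt_nonneg\<close>)
  then show ?thesis using decomp[OF assms(1), of n] by simp
qed

lemma img_cball_n:
  "(\<lambda>a. 3^n * a - real j) ` cball y (r / 3^n) = cball (3^n * y - real j) r"
  using img_cball[of "3^n" "real j" y "r / 3^n"] by simp

lemma two_terms:
  fixes g :: "nat \<Rightarrow> real"
  assumes "\<And>i. g i \<ge> 0" "j < L" "j \<ge> 1"
  shows "g j + g (j - 1) \<le> (\<Sum>i<L. g i)"
proof -
  have "(\<Sum>i\<in>{j - 1, j}. g i) \<le> (\<Sum>i<L. g i)"
    by (rule sum_mono2) (use assms in auto)
  moreover have "(\<Sum>i\<in>{j - 1, j}. g i) = g j + g (j - 1)" using assms(3) by simp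
  ultimately show ?thesis by simp
qed

lemma lb_mid:
  assumes y: "1/2 \<le> y" "y \<le> 3/2"
  shows "measure M (cball y (1/3^n)) \<ge> (5/16)^n / 16"
proof (cases "n = 0")
  case True
  show ?thesis
  proof (cases "y \<le> 1")
    case True
    have "cball (1/2) (1/2) \<subseteq> cball y 1" using True y by (auto simp: dist_real_def abs_if split: if_splits)
    then have "measure M (cball (1/2) (1/2)) \<le> measure M (cball y 1)" by (rule mono_cball)
    then show ?thesis using pos_left \<open>n = 0\<close> by simp
  next
    case False
    have "cball (3/2) (1/2) \<subseteq> cball y 1" using False y by (auto simp: dist_real_def abs_if split: if_splits)
    then have "measure M (cball (3/2) (1/2)) \<le> measure M (cball y 1)" by (rule mono_cball)
    then show ?thesis using pos_right \<open>n = 0\<close> by simp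
  qed
next
  case False
  then have n1: "n \<ge> 1" by simp
  define N :: real where "N = 3^n"
  have "(3::real)^1 \<le> 3^n" by (rule power_increasing) (use n1 in auto)
  then have N1: "N \<ge> 3" by (simp add: N_def)
  define j where "j = nat \<lfloor>N*y\<rfloor>"
  have Ny: "N*y \<ge> 0" using y N1 by simp
  have jr: "real j = of_int \<lfloor>N*y\<rfloor>" using Ny by (simp add: j_def)
  have j1: "real j \<le> N*y" "N*y < real j + 1" using jr by linarith+
  have c1: "real (cc n) = (N - 1)/2" by (simp add: cc_real N_def)
  have c2: "real (cc' n) = (3*N - 1)/2" by (simp add: cc'_real N_def)
  have "N * (1/2) \<le> N*y" using y N1 by (intro mult_left_mono) auto
  then have "N / 2 \<le> N*y" by simp
  then have "real (cc n) < real j + 1" using c1 j1 by argo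
  then have jlo: "cc n \<le> j" by linarith
  have "N*y \<le> N*(3/2)" using y N1 by (intro mult_left_mono) auto
  then have "N*y \<le> 3 * N / 2" by simp
  then have "real j < real (cc' n) + 1" using c2 j1 by argo
  then have jhi: "j \<le> cc' n" by linarith
  have jge1: "j \<ge> 1" using cc_ge1[OF n1] jlo by simp
  have "real (cc' n) < 2 * N" using c2 N1 by simp
  moreover have "real j \<le> real (cc' n)" using jhi by simp
  ultimately have "real j < real (2*3^n)" by (simp add: N_def)
  then have jL: "j < 2*3^n" by (simp only: of_nat_less_iff)
  define g where "g i = cnt n i / 16^n * measure M ((\<lambda>a. 3^n * a - real i) ` cball y (1/3^n))" for i
  have gnn: "g i \<ge> 0" for i by (simp add: g_def cnt_nonneg)
  have "g j + g (j - 1) \<le> (\<Sum>i<2*3^n. g i)" by (rule two_terms) (use gnn jL jge1 in auto)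
  also have "\<dots> = measure M (cball y (1/3^n))" unfolding g_def by (rule decomp[symmetric]) simp
  finally have S: "g j + g (j - 1) \<le> measure M (cball y (1/3^n))" .
  have im: "(\<lambda>a. 3^n * a - real i) ` cball y (1/3^n) = cball (N*y - real i) 1" for i
    using img_cball_n[of n i y 1] by (simp add: N_def)
  have m1: "measure M (cball (N*y - real j) 1) \<ge> 1/16"
  proof -
    have "cball (1/2) (1/2) \<subseteq> cball (N*y - real j) 1" using j1 by (auto simp: dist_real_def abs_if split: if_splits)
    then show ?thesis using mono_cball pos_left by (meson order_trans)
  qed
  have m2: "measure M (cball (N*y - real (j - 1)) 1) \<ge> 1/16"
  proof -
    have "real (j - 1) = real j - 1" using jge1 by simp
    then have "cball (3/2) (1/2) \<subseteq> cball (N*y - real (j - 1)) 1" using j1 by (auto simp: dist_real_def abs_if split: if_splits)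
    then show ?thesis using mono_cball pos_right by (meson order_trans)
  qed
  have "g j \<ge> cnt n j / 16^n * (1/16)"
    unfolding g_def im using m1 cnt_nonneg[of n j] by (intro mult_left_mono) auto
  moreover have "g (j - 1) \<ge> cnt n (j - 1) / 16^n * (1/16)"
    unfolding g_def im using m2 cnt_nonneg[of n "j - 1"] by (intro mult_left_mono) auto
  moreover have "cnt n j + cnt n (j - 1) \<ge> 5^n" by (rule cnt_lower[OF jlo jhi])
  ultimately have "g j + g (j - 1) \<ge> 5^n / 16^n / 16" by (simp add: field_simps)
  then show ?thesis using S by (simp add: power_divide)
qed

lemma lb_interior:
  assumes x: "0 < x" "x < 2"
  shows "\<exists>C>0. \<forall>n. measure M (cball x (1/3^n)) \<ge> C * (5/16)^n"
proof -
  define \<delta> where "\<delta> = min x (2 - x)"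
  have d0: "\<delta> > 0" using x by (simp add: \<delta>_def)
  obtain m where m: "1/\<delta> < (3::real)^m" using real_arch_pow[of 3 "1/\<delta>"] by auto
  define M3 :: real where "M3 = 3^m"
  have M3pos: "M3 > 0" by (simp add: M3_def)
  have "1 < M3 * \<delta>" using m d0 by (simp add: M3_def field_simps)
  then have mx: "M3 * x \<ge> 1" "M3 * (2 - x) \<ge> 1" using M3pos
    by (smt (verit) \<delta>_def min_def mult_left_mono)+
  define j0 where "j0 = nat \<lfloor>M3 * x - 1/2\<rfloor>"
  have jr: "real j0 = of_int \<lfloor>M3 * x - 1/2\<rfloor>" using mx by (simp add: j0_def)
  have j1: "real j0 \<le> M3 * x - 1/2" "M3 * x - 1/2 < real j0 + 1" using jr by linarith+
  define y where "y = M3 * x - real j0"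
  have y: "1/2 \<le> y" "y \<le> 3/2" using j1 by (simp_all add: y_def)
  have "M3 * (2 - x) = 2 * M3 - M3 * x" by (simp add: algebra_simps)
  then have "real j0 < real (2 * 3^m - 1)" using j1 mx by (simp add: M3_def of_nat_diff)
  then have j0b: "j0 + 2 \<le> 2 * 3^m" "j0 < 2 * 3^m" by linarith+
  have cpos: "cnt m j0 > 0" by (rule cnt_pos) (use j0b in simp)
  define C where "C = cnt m j0 / 16^m / 16"
  have C0: "C > 0" using cpos by (simp add: C_def)
  show ?thesis
  proof (intro exI[of _ C] conjI allI)
    show "C > 0" by (rule C0)
    fix n
    have im: "(\<lambda>a. 3^m * a - real j0) ` cball x ((1/3^n) / 3^m) = cball y (1/3^n)"
      using img_cball_n[of m j0 x "1/3^n"] by (simp add: y_def M3_def)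
    have "measure M (cball x ((1/3^n) / 3^m)) \<ge> cnt m j0 / 16^m * measure M ((\<lambda>a. 3^m * a - real j0) ` cball x ((1/3^n) / 3^m))"
      by (rule decomp_ge) (use j0b in simp_all)
    also have "measure M ((\<lambda>a. 3^m * a - real j0) ` cball x ((1/3^n) / 3^m)) \<ge> (5/16)^n / 16"
      unfolding im by (rule lb_mid[OF y])
    then have "cnt m j0 / 16^m * measure M ((\<lambda>a. 3^m * a - real j0) ` cball x ((1/3^n) / 3^m)) \<ge> cnt m j0 / 16^m * ((5/16)^n / 16)"
      using cpos by (intro mult_left_mono) auto
    finally have A: "measure M (cball x ((1/3^n) / 3^m)) \<ge> C * (5/16)^n" by (simp add: C_def)
    have "cball x ((1/3^n) / 3^m) \<subseteq> cball x (1/3^n)"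
      by (intro subset_cball) (use one_le_power[of "3::real" m] in \<open>simp add: field_simps\<close>)
    then have "measure M (cball x ((1/3^n) / 3^m)) \<le> measure M (cball x (1/3^n))" by (rule mono_cball)
    then show "measure M (cball x (1/3^n)) \<ge> C * (5/16)^n" using A by linarith
  qed
qed

lemma window_sum:
  fixes c :: real and L cc0 :: nat
  assumes "c \<ge> 0" "cc0 \<ge> 2"
  shows "(\<Sum>j<L. if cc0 \<le> j + 2 \<and> j \<le> cc0 + 1 then c else 0) \<le> 4 * c"
proof -
  have "(\<Sum>j<L. if cc0 \<le> j + 2 \<and> j \<le> cc0 + 1 then c else 0)
      = (\<Sum>j<L. if j \<in> {cc0 - 2..cc0 + 1} then c else 0)"
    by (rule sum.cong) (use assms in auto)
  also have "\<dots> = (\<Sum>j\<in>{..<L} \<inter> {cc0 - 2..cc0 + 1}. c)"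
    by (rule sum.inter_restrict[symmetric]) simp
  also have "\<dots> = c * card ({..<L} \<inter> {cc0 - 2..cc0 + 1})" by simp
  also have "\<dots> \<le> c * card {cc0 - 2..cc0 + 1}"
  proof -
    have "card ({..<L} \<inter> {cc0 - 2..cc0 + 1}) \<le> card {cc0 - 2..cc0 + 1}" by (rule card_mono) auto
    then have "real (card ({..<L} \<inter> {cc0 - 2..cc0 + 1})) \<le> real (card {cc0 - 2..cc0 + 1})" by (simp only: of_nat_le_iff)
    then show ?thesis using assms(1) by (rule mult_left_mono)
  qed
  also have "card {cc0 - 2..cc0 + 1} = 4" using assms(2) by simp
  finally show ?thesis by simp
qed

lemma ub_half: "measure M (cball (1/2) (1/3^n)) \<le> 24/5 * (5/16)^n"
proof (cases "n \<le> 1")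
  case True
  have "measure M (cball (1/2) (1/3^n)) \<le> 1" by (rule prob_le_1)
  moreover have "1 \<le> 24/5 * (5/16::real)^n" using True by (cases n) auto
  ultimately show ?thesis by linarith
next
  case False
  then obtain m where nm: "n = Suc m" and m1: "m \<ge> 1" by (cases n) auto
  define N :: real where "N = 3^n"
  have c1: "real (cc n) = (N - 1)/2" by (simp add: cc_real N_def)
  have ccn: "cc n \<ge> 4" using cc_ge1[OF m1] by (simp add: nm cc_Suc)
  define g where "g j = cnt n j / 16^n * measure M ((\<lambda>a. 3^n * a - real j) ` cball (1/2) (1/3^n))" for j
  have im: "(\<lambda>a. 3^n * a - real j) ` cball (1/2) (1/3^n) = cball (N/2 - real j) 1" for j
    using img_cball_n[of n j "1/2" 1] by (simp add: N_def)
  have gle: "g j \<le> (if cc n \<le> j + 2 \<and> j \<le> cc n + 1 then 6 * 5^m / 16^n else 0)" for j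
  proof (cases "cc n \<le> j + 2 \<and> j \<le> cc n + 1")
    case True
    have "cnt n j \<le> 6 * 5^m" unfolding nm by (rule cnt_window[OF m1]) (use True nm in auto)
    moreover have "measure M (cball (N/2 - real j) 1) \<le> 1" by (rule prob_le_1)
    ultimately have "cnt n j * measure M (cball (N/2 - real j) 1) \<le> 6 * 5^m * 1"
      using cnt_nonneg[of n j] by (intro mult_mono) auto
    then show ?thesis using True unfolding g_def im by (simp add: divide_right_mono)
  next
    case False
    have "cball (N/2 - real j) 1 \<inter> {0..2} = {}"
    proof (cases "j + 2 < cc n")
      case True
      then have "real j + 3 \<le> real (cc n)" by linarith
      then have "N/2 - real j \<ge> 7/2" using c1 by argo
      then show ?thesis by (auto simp: dist_real_def abs_if split: if_splits)
    next
      case False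
      then have "j \<ge> cc n + 2" using \<open>\<not> (cc n \<le> j + 2 \<and> j \<le> cc n + 1)\<close> by linarith
      then have "real j \<ge> real (cc n) + 2" by linarith
      then have "N/2 - real j \<le> -3/2" using c1 by argo
      then show ?thesis by (auto simp: dist_real_def abs_if split: if_splits)
    qed
    then have "measure M (cball (N/2 - real j) 1) = 0" by (intro null_outside) auto
    then show ?thesis using False unfolding g_def im by simp
  qed
  have "measure M (cball (1/2) (1/3^n)) = (\<Sum>j<2*3^n. g j)" unfolding g_def by (rule decomp) simp
  also have "\<dots> \<le> (\<Sum>j<2*3^n. if cc n \<le> j + 2 \<and> j \<le> cc n + 1 then 6 * 5^m / 16^n else 0)"
    by (rule sum_mono) (rule gle)
  also have "\<dots> \<le> 4 * (6 * 5^m / 16^n)" by (rule window_sum) (use ccn in auto)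
  also have "\<dots> = 24/5 * (5/16)^n" by (simp add: nm power_divide)
  finally show ?thesis .
qed

lemma exact0: "measure M (cball 0 ((1/2)/3^n)) = measure M (cball 0 (1/2)) * (1/16)^n"
proof -
  define g where "g j = cnt n j / 16^n * measure M ((\<lambda>a. 3^n * a - real j) ` cball 0 ((1/2)/3^n))" for j
  have im: "(\<lambda>a. 3^n * a - real j) ` cball 0 ((1/2)/3^n) = cball (- real j) (1/2)" for j
    using img_cball_n[of n j 0 "1/2"] by simp
  have z: "g j = 0" if "j \<noteq> 0" for j
  proof -
    have "real j \<ge> 1" using that by simp
    then have "cball (- real j) (1/2) \<inter> {0..2} = {}" by (auto simp: dist_real_def abs_if split: if_splits)
    then have "measure M (cball (- real j) (1/2)) = 0" by (intro null_outside) auto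
    then show ?thesis unfolding g_def im by simp
  qed
  have "measure M (cball 0 ((1/2)/3^n)) = (\<Sum>j<2*3^n. g j)" unfolding g_def by (rule decomp) simp
  also have "\<dots> = g 0 + (\<Sum>j\<in>{..<2*3^n} - {0}. g j)" by (rule sum.remove) simp_all
  also have "(\<Sum>j\<in>{..<2*3^n} - {0}. g j) = 0" by (rule sum.neutral) (use z in auto)
  also have "g 0 = measure M (cball 0 (1/2)) * (1/16)^n" unfolding g_def im by (simp add: cnt_bot power_one_over)
  finally show ?thesis by simp
qed

lemma exact2: "measure M (cball 2 ((1/2)/3^n)) = measure M (cball 2 (1/2)) * (1/16)^n"
proof -
  define N :: real where "N = 3^n"
  have N1: "N \<ge> 1" by (simp add: N_def)
  define T :: nat where "T = 2 * 3^n - 2"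
  have Tr: "real T = 2*N - 2" using N1 by (simp add: T_def N_def of_nat_diff)
  have TL: "T < 2 * 3^n" by (simp add: T_def)
  define g where "g j = cnt n j / 16^n * measure M ((\<lambda>a. 3^n * a - real j) ` cball 2 ((1/2)/3^n))" for j
  have im: "(\<lambda>a. 3^n * a - real j) ` cball 2 ((1/2)/3^n) = cball (2*N - real j) (1/2)" for j
    using img_cball_n[of n j 2 "1/2"] by (simp add: N_def mult.commute)
  have z: "g j = 0" if "j \<noteq> T" "j < 2 * 3^n" for j
  proof (cases "j < T")
    case True
    then have "real j + 1 \<le> real T" by linarith
    then have "2*N - real j \<ge> 3" using Tr by linarith
    then have "cball (2*N - real j) (1/2) \<inter> {0..2} = {}" by (auto simp: dist_real_def abs_if split: if_splits)
    then have "measure M (cball (2*N - real j) (1/2)) = 0" by (intro null_outside) auto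
    then show ?thesis unfolding g_def im by simp
  next
    case False
    then have "2 * 3^n \<le> j + 1" using that by (simp add: T_def)
    then have "cnt n j = 0" by (rule cnt_zero)
    then show ?thesis by (simp add: g_def)
  qed
  have "measure M (cball 2 ((1/2)/3^n)) = (\<Sum>j<2*3^n. g j)" unfolding g_def by (rule decomp) simp
  also have "\<dots> = g T + (\<Sum>j\<in>{..<2*3^n} - {T}. g j)" by (rule sum.remove) (simp_all add: TL)
  also have "(\<Sum>j\<in>{..<2*3^n} - {T}. g j) = 0" by (rule sum.neutral) (use z in auto)
  also have "g T = measure M (cball 2 (1/2)) * (1/16)^n"
    using cnt_top[of n] unfolding g_def im by (simp add: Tr T_def[symmetric] power_one_over)
  finally show ?thesis by simp
qed

lemma pos_from_lb:
  assumes s: "s > 0" and C: "C > 0" and \<rho>: "\<rho> > 0"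
    and lb: "\<And>n. measure M (cball x (s / 3^n)) \<ge> C * \<rho>^n" and r: "r > 0"
  shows "measure M (cball x r) > 0"
proof -
  obtain n where n: "s / r < (3::real)^n" using real_arch_pow[of 3 "s/r"] by auto
  then have "s / 3^n < r" using r by (simp add: field_simps)
  then have "measure M (cball x (s / 3^n)) \<le> measure M (cball x r)"
    by (intro mono_cball subset_cball) simp
  moreover have "C * \<rho>^n > 0" using C \<rho> by simp
  ultimately show ?thesis using lb[of n] by linarith
qed

lemma mono_f: "0 < r \<Longrightarrow> r \<le> t \<Longrightarrow> measure M (cball x r) \<le> measure M (cball x t)"
  by (intro mono_cball subset_cball)

lemma dim_exact:
  assumes s: "s > 0" and C: "C > 0" and \<rho>: "0 < \<rho>" "\<rho> \<le> 1"
    and lb: "\<And>n. measure M (cball x (s / 3^n)) \<ge> C * \<rho>^n"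
    and ub: "\<And>n. measure M (cball x (s / 3^n)) \<le> D * \<rho>^n" and D: "D > 0"
  shows "has_local_dim M x (dimexp \<rho>)"
proof -
  obtain K1 where K1: "\<forall>r. 0 < r \<and> r \<le> s \<longrightarrow> ln (measure M (cball x r)) \<ge> dimexp \<rho> * ln r - K1"
    using log_lower[OF s C \<rho> mono_f lb] by blast
  obtain K2 where K2: "\<forall>r. 0 < r \<and> r \<le> s \<longrightarrow> ln (measure M (cball x r)) \<le> dimexp \<rho> * ln r + K2"
    using log_upper[OF s D \<rho> mono_f pos_from_lb[OF s C \<rho>(1) lb] ub] by blast
  have "\<forall>r. 0 < r \<and> r \<le> s \<longrightarrow> \<bar>ln (measure M (cball x r)) - dimexp \<rho> * ln r\<bar> \<le> max K1 K2"
    using K1 K2 by (auto simp: abs_le_iff)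
  then show ?thesis unfolding has_local_dim_def by (rule dim_from_bounds[OF s])
qed

lemma dim_half: "has_local_dim M (1/2) (dimexp (5/16))"
  by (rule dim_exact[of 1 "1/16" _ _ "24/5"]) (use lb_mid[of "1/2"] ub_half in \<open>auto simp: mult.commute\<close>)

lemma dim_0: "has_local_dim M 0 (dimexp (1/16))"
proof -
  have p: "measure M (cball 0 (1/2)) > 0" using pos_0 by linarith
  show ?thesis
    by (rule dim_exact[of "1/2" "measure M (cball 0 (1/2))" _ _ "measure M (cball 0 (1/2))"])
      (use p exact0 in auto)
qed

lemma dim_2: "has_local_dim M 2 (dimexp (1/16))"
proof -
  have p: "measure M (cball 2 (1/2)) > 0" using pos_2 by linarith
  show ?thesis
    by (rule dim_exact[of "1/2" "measure M (cball 2 (1/2))" _ _ "measure M (cball 2 (1/2))"])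
      (use p exact2 in auto)
qed

lemma dim_interior_le:
  assumes "0 < x" "x < 2" "has_local_dim M x a"
  shows "a \<le> dimexp (5/16)"
proof -
  obtain C where C: "C > 0" "\<And>n. measure M (cball x (1/3^n)) \<ge> C * (5/16)^n"
    using lb_interior[OF assms(1,2)] by blast
  obtain K where K: "\<forall>r. 0 < r \<and> r \<le> 1 \<longrightarrow> ln (measure M (cball x r)) \<ge> dimexp (5/16) * ln r - K"
    using log_lower[of 1 C "5/16" "\<lambda>r. measure M (cball x r)"] C mono_f by auto
  show ?thesis by (rule dim_le_from_lower[of 1, OF _ K]) (use assms(3) in \<open>auto simp: has_local_dim_def\<close>)
qed

lemma msupp_sub: "x \<in> msupp M \<Longrightarrow> 0 \<le> x \<and> x \<le> 2"
proof (rule ccontr)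
  assume x: "x \<in> msupp M" and nx: "\<not> (0 \<le> x \<and> x \<le> 2)"
  define r where "r = (if x < 0 then - x / 2 else (x - 2) / 2)"
  have r0: "r > 0" using nx by (auto simp: r_def)
  have "cball x r \<inter> {0..2} = {}" using nx by (auto simp: r_def dist_real_def abs_if split: if_splits)
  then have "measure M (cball x r) = 0" by (intro null_outside) auto
  then have "emeasure M (cball x r) = 0" by (simp add: emeasure_eq_measure)
  moreover have "emeasure M (cball x r) > 0" using x r0 by (auto simp: msupp_def)
  ultimately show False by simp
qed

lemma half_in: "1/2 \<in> msupp M"
  unfolding msupp_def
proof (intro CollectI allI impI)
  fix r :: real assume r: "r > 0"
  have "measure M (cball (1/2) r) > 0"
    by (rule pos_from_lb[of 1 "1/16" "5/16"]) (use lb_mid[of "1/2"] r in \<open>auto simp: mult.commute\<close>)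
  then show "emeasure M (cball (1/2) r) > 0" by (simp add: emeasure_eq_measure)
qed

end

lemma dimexp_516: "dimexp (5/16) = ln (16/5) / ln 3"
proof -
  have "ln (5/16::real) = - ln (16/5)" by (simp add: ln_div)
  then show ?thesis by (simp add: dimexp_def)
qed

lemma ln16: "ln (16::real) = 4 * ln 2"
proof -
  have "ln ((2::real)^4) = real 4 * ln 2" by (rule ln_realpow)
  then show ?thesis by simp
qed

lemma dimexp_116: "dimexp (1/16) = 4 * ln 2 / ln 3"
  by (simp add: dimexp_def ln_div ln16)

lemma alpha_ne_beta: "ln (16/5) / ln 3 \<noteq> 4 * ln 2 / ln (3::real)"
proof
  assume "ln (16/5) / ln 3 = 4 * ln 2 / ln (3::real)"
  then have "ln (16/5) = 4 * ln (2::real)" by (simp add: field_simps)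
  moreover have "ln (16/5::real) = ln 16 - ln 5" by (simp add: ln_div)
  moreover have "ln (5::real) > 0" by simp
  ultimately show False using ln16 by simp
qed

theorem lemma20:
  fixes M :: "real measure"
  assumes "self_similar_measure 3 4 (\<lambda>i. real (4 choose i) / 16) M"
  shows "Sup (local_dims M - {4 * ln 2 / ln 3}) = ln (16 / 5) / ln 3
         \<and> 1 / 2 \<in> msupp M
         \<and> has_local_dim M (1 / 2) (ln (16 / 5) / ln 3)"
proof -
  interpret mu4 M by unfold_locales (rule assms)
  have hd: "has_local_dim M (1 / 2) (ln (16 / 5) / ln 3)" using dim_half dimexp_516 by simp
  have hin: "1/2 \<in> msupp M" by (rule half_in)
  have mem: "ln (16 / 5) / ln 3 \<in> local_dims M - {4 * ln 2 / ln 3}"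
    using hd hin alpha_ne_beta by (auto simp: local_dims_def)
  have le: "a \<le> ln (16 / 5) / ln 3" if a: "a \<in> local_dims M - {4 * ln 2 / ln 3}" for a
  proof -
    obtain x where x: "x \<in> msupp M" "has_local_dim M x a" and ab: "a \<noteq> 4 * ln 2 / ln 3"
      using a by (auto simp: local_dims_def)
    have x02: "0 \<le> x" "x \<le> 2" using msupp_sub[OF x(1)] by auto
    have uniq: "a = b" if "has_local_dim M x a" "has_local_dim M x b" for a b
      using that unfolding has_local_dim_def by (rule tendsto_unique[rotated]) simp
    show ?thesis
    proof (cases "x = 0 \<or> x = 2")
      case True
      then have "has_local_dim M x (4 * ln 2 / ln 3)" using dim_0 dim_2 dimexp_116 by auto
      then have "a = 4 * ln 2 / ln 3" using uniq x(2) by blast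
      then show ?thesis using ab by simp
    next
      case False
      then have "0 < x" "x < 2" using x02 by auto
      then show ?thesis using dim_interior_le x(2) dimexp_516 by simp
    qed
  qed
  have "Sup (local_dims M - {4 * ln 2 / ln 3}) = ln (16 / 5) / ln 3"
    by (rule cSup_eq_maximum[OF mem]) (use le in blast)
  then show ?thesis using hd hin by simp
qed


end
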